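(* The function $a\mapsto\lambda_c(a):=\|\mathbf T_{\kappa^{(a)}}\|^{-1}$ is non-increasing on $(0,\infty)$.
   Context: Fix $\tau\in(2,3)$, $\alpha=1/(\tau-1)$, constants $c_{\mathrm F},\mu>0$. For $a>0$ let $\Lambda_a(dx)=dx/a$ be normalized Lebesgue measure on $(0,a]$, $\kappa^{(a)}(u,v)=a\big[1-e^{-c_{\mathrm F}^2(uv)^{-\alpha}/\mu}\big]$ for $u,v\in(0,a]$, and $\mathbf T_{\kappa^{(a)}}$ the integral operator on $L^2((0,a],\Lambda_a)$ given by $(\mathbf T_{\kappa^{(a)}}f)(u)=\int_0^a\kappa^{(a)}(u,v)f(v)\Lambda_a(dv)$; $\|\cdot\|$ is the operator norm. *)

theory Defs
  imports "HOL-Analysis.Analysis"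
begin

definition kappa :: "real \<Rightarrow> real \<Rightarrow> real \<Rightarrow> real \<Rightarrow> real \<Rightarrow> real \<Rightarrow> real" where
  "kappa tau cF mu a u v =
     a * (1 - exp (- (cF\<^sup>2 * (u * v) powr (- (1 / (tau - 1)))) / mu))"

definition Lam_int :: "real \<Rightarrow> (real \<Rightarrow> real) \<Rightarrow> real" where
  "Lam_int a g = (1 / a) * (LBINT v:{0<..a}. g v)"

text \<open>Elements of L^2((0,a], Lambda_a) (real-valued representatives).\<close>
definition L2_on :: "real \<Rightarrow> (real \<Rightarrow> real) set" where
  "L2_on a = {f. f \<in> borel_measurable lborel \<and>
                 set_integrable lborel {0<..a} (\<lambda>x. (f x)\<^sup>2)}"

definition T_op :: "real \<Rightarrow> real \<Rightarrow> real \<Rightarrow> real \<Rightarrow> (real \<Rightarrow> real) \<Rightarrow> (real \<Rightarrow> real)" where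
  "T_op tau cF mu a f = (\<lambda>u. Lam_int a (\<lambda>v. kappa tau cF mu a u v * f v))"

definition L2_norm_on :: "real \<Rightarrow> (real \<Rightarrow> real) \<Rightarrow> real" where
  "L2_norm_on a f = sqrt (Lam_int a (\<lambda>x. (f x)\<^sup>2))"

definition T_norm :: "real \<Rightarrow> real \<Rightarrow> real \<Rightarrow> real \<Rightarrow> real" where
  "T_norm tau cF mu a =
     Sup ((\<lambda>f. L2_norm_on a (T_op tau cF mu a f)) ` {f \<in> L2_on a. L2_norm_on a f \<le> 1})"

definition lambda_c :: "real \<Rightarrow> real \<Rightarrow> real \<Rightarrow> real \<Rightarrow> real" where
  "lambda_c tau cF mu a = inverse (T_norm tau cF mu a)"

end

theory Submission
  imports Defs
begin

lemma kappa_eq: "kappa tau cF mu a u v = a * kappa tau cF mu 1 u v"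
  unfolding kappa_def by simp

lemma kappa1_bounds:
  assumes "mu > 0"
  shows "0 \<le> kappa tau cF mu 1 u v" "kappa tau cF mu 1 u v \<le> 1"
proof -
  have "0 \<le> cF\<^sup>2 * (u * v) powr (- (1 / (tau - 1))) / mu" using assms by simp
  then have "exp (- (cF\<^sup>2 * (u * v) powr (- (1 / (tau - 1)))) / mu) \<le> 1" by simp
  then show "0 \<le> kappa tau cF mu 1 u v" unfolding kappa_def by simp
  show "kappa tau cF mu 1 u v \<le> 1" unfolding kappa_def by simp
qed

lemma kappa_meas: "(\<lambda>(u,v). kappa tau cF mu a u v) \<in> borel_measurable (lborel \<Otimes>\<^sub>M lborel)"
  unfolding kappa_def by measurable

lemma kappa_meas2: "(\<lambda>v. kappa tau cF mu a u v) \<in> borel_measurable lborel"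
  unfolding kappa_def by measurable

lemma const_set_integrable: "set_integrable lborel {0<..(a::real)} (\<lambda>_. c::real)"
proof -
  have "emeasure lborel {0<..a} < \<infinity>" by (cases "0 \<le> a") auto
  then have "integrable lborel (\<lambda>x. indicat_real {0<..a} x * c)"
    by (intro integrable_mult_left integrable_real_indicator) auto
  then show ?thesis unfolding set_integrable_def by simp
qed

lemma const_set_integral: "0 \<le> a \<Longrightarrow> (LBINT x:{0<..(a::real)}. (c::real)) = a * c"
  by (subst set_integral_const) auto

lemma sbm: "(g::real\<Rightarrow>real) \<in> borel_measurable lborel \<Longrightarrow> A \<in> sets borel \<Longrightarrow> set_borel_measurable lborel A g"
  unfolding set_borel_measurable_def by (auto intro!: borel_measurable_scaleR borel_measurable_indicator simp: measurable_lborel1)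
  
lemma Top_meas:
  assumes "f \<in> borel_measurable lborel"
  shows "T_op tau cF mu a f \<in> borel_measurable lborel"
proof -
  have m: "(\<lambda>(u,v). kappa tau cF mu a u v) \<in> borel_measurable (lborel \<Otimes>\<^sub>M lborel)" by (rule kappa_meas)
  have "(\<lambda>u. LBINT v:{0<..a}. kappa tau cF mu a u v * f v) \<in> borel_measurable lborel"
    unfolding set_lebesgue_integral_def
    by (rule lborel.borel_measurable_lebesgue_integral) (use m assms in measurable)
  then show ?thesis unfolding T_op_def Lam_int_def by measurable
qed

lemma Top_bound:
  assumes a: "a > 0" and mu: "mu > 0" and f: "f \<in> L2_on a" and n: "L2_norm_on a f \<le> 1"
  shows "\<bar>T_op tau cF mu a f u\<bar> \<le> a"
proof -
  have fm: "f \<in> borel_measurable lborel" and f2: "set_integrable lborel {0<..a} (\<lambda>x. (f x)\<^sup>2)"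
    using f unfolding L2_on_def by auto
  have "(1/a) * (LBINT v:{0<..a}. (f v)\<^sup>2) \<le> 1"
    using n unfolding L2_norm_on_def Lam_int_def by (simp add: real_sqrt_le_1_iff)
  then have I: "(LBINT v:{0<..a}. (f v)\<^sup>2) \<le> a" using a by (simp add: field_simps)
  define g where "g = (\<lambda>x. (1/2) * (1 + (f x)\<^sup>2))"
  have gi: "set_integrable lborel {0<..a} g"
    unfolding g_def by (rule set_integrable_mult_right) (rule set_integral_add(1)[OF const_set_integrable f2])
  have gI: "(LBINT v:{0<..a}. g v) = (a + (LBINT v:{0<..a}. (f v)\<^sup>2)) / 2"
    unfolding g_def using a by (simp add: set_integral_add(2)[OF const_set_integrable f2] const_set_integral)
  have bnd: "\<bar>kappa tau cF mu 1 u v * f v\<bar> \<le> g v" for v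
  proof -
    have "\<bar>kappa tau cF mu 1 u v * f v\<bar> \<le> \<bar>f v\<bar>"
      using kappa1_bounds[OF mu, of tau cF u v] by (simp add: abs_mult mult_left_le_one_le) 
    also have "\<bar>f v\<bar> \<le> g v" unfolding g_def
      using sum_squares_ge_zero[of "\<bar>f v\<bar> - 1" 0] by (simp add: power2_eq_square algebra_simps) 
    finally show ?thesis .
  qed
  have ki: "set_integrable lborel {0<..a} (\<lambda>v. kappa tau cF mu 1 u v * f v)"
  proof (rule set_integrable_bound[OF gi])
    show "set_borel_measurable lborel {0<..a} (\<lambda>v. kappa tau cF mu 1 u v * f v)"
      by (auto intro!: sbm kappa_meas2 fm borel_measurable_times)
    have "norm (kappa tau cF mu 1 u v * f v) \<le> norm (g v)" for v
      using bnd[of v] by (metis abs_ge_zero abs_of_nonneg order_trans real_norm_def)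
    then show "AE x in lborel. x \<in> {0<..a} \<longrightarrow> norm (kappa tau cF mu 1 u x * f x) \<le> norm (g x)"
      by simp
  qed
  have eq: "T_op tau cF mu a f u = (LBINT v:{0<..a}. kappa tau cF mu 1 u v * f v)"
    unfolding T_op_def Lam_int_def by (subst kappa_eq) (use a in \<open>simp add: mult.assoc less_imp_neq[symmetric]\<close>)
  have "(LBINT v:{0<..a}. kappa tau cF mu 1 u v * f v) \<le> (LBINT v:{0<..a}. g v)"
    by (rule set_integral_mono[OF ki gi]) (rule abs_le_D1[OF bnd])
  moreover have "- (LBINT v:{0<..a}. kappa tau cF mu 1 u v * f v) \<le> (LBINT v:{0<..a}. g v)"
  proof -
    have "(LBINT v:{0<..a}. - (kappa tau cF mu 1 u v * f v)) \<le> (LBINT v:{0<..a}. g v)"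
      by (rule set_integral_mono[OF _ gi]) (use ki in \<open>auto intro: abs_le_D2[OF bnd] simp: set_integrable_def\<close>)
    then show ?thesis by (simp only: set_integral_uminus[OF ki])
  qed
  moreover have "(LBINT v:{0<..a}. g v) \<le> a" unfolding gI using I by simp
  ultimately show ?thesis unfolding eq by (simp add: abs_le_iff)
qed


lemma T_eq: "a \<noteq> 0 \<Longrightarrow> T_op tau cF mu a f u = (LBINT v:{0<..a}. kappa tau cF mu 1 u v * f v)"
  unfolding T_op_def Lam_int_def by (subst kappa_eq) (simp add: mult.assoc)

lemma Top_sq:
  assumes a: "a > 0" and b: "b > 0" and mu: "mu > 0" and f: "f \<in> L2_on a" and n: "L2_norm_on a f \<le> 1"
  shows "set_integrable lborel {0<..b} (\<lambda>u. (T_op tau cF mu a f u)\<^sup>2)"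
    "(LBINT u:{0<..b}. (T_op tau cF mu a f u)\<^sup>2) \<le> b * a\<^sup>2"
proof -
  have fm: "f \<in> borel_measurable lborel" using f unfolding L2_on_def by auto
  have bd: "(T_op tau cF mu a f u)\<^sup>2 \<le> a\<^sup>2" for u
  proof -
    have "\<bar>T_op tau cF mu a f u\<bar>\<^sup>2 \<le> a\<^sup>2"
      by (rule power_mono[OF Top_bound[OF a mu f n]]) simp
    then show ?thesis by simp
  qed
  show si: "set_integrable lborel {0<..b} (\<lambda>u. (T_op tau cF mu a f u)\<^sup>2)"
  proof (rule set_integrable_bound[OF const_set_integrable[of b "a\<^sup>2"]])
    show "set_borel_measurable lborel {0<..b} (\<lambda>u. (T_op tau cF mu a f u)\<^sup>2)"
      by (intro sbm borel_measurable_power Top_meas fm) auto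
    show "AE x in lborel. x \<in> {0<..b} \<longrightarrow> norm ((T_op tau cF mu a f x)\<^sup>2) \<le> norm (a\<^sup>2)"
      using bd by simp
  qed
  have "(LBINT u:{0<..b}. (T_op tau cF mu a f u)\<^sup>2) \<le> (LBINT u:{0<..b}. a\<^sup>2)"
    by (rule set_integral_mono[OF si const_set_integrable]) (rule bd)
  then show "(LBINT u:{0<..b}. (T_op tau cF mu a f u)\<^sup>2) \<le> b * a\<^sup>2"
    using b by (simp add: const_set_integral)
qed

lemma elem_bound:
  assumes a: "a > 0" and mu: "mu > 0" and f: "f \<in> L2_on a" and n: "L2_norm_on a f \<le> 1"
  shows "L2_norm_on a (T_op tau cF mu a f) \<le> a"
proof -
  have "(1/a) * (LBINT u:{0<..a}. (T_op tau cF mu a f u)\<^sup>2) \<le> (1/a) * (a * a\<^sup>2)"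
    using Top_sq(2)[OF a a mu f n] a by (intro mult_left_mono) auto
  also have "\<dots> = a\<^sup>2" using a by simp
  finally have "L2_norm_on a (T_op tau cF mu a f) \<le> sqrt (a\<^sup>2)"
    unfolding L2_norm_on_def Lam_int_def by (rule real_sqrt_le_mono)
  then show ?thesis using a by simp
qed

lemma bdd: "a > 0 \<Longrightarrow> mu > 0 \<Longrightarrow> bdd_above ((\<lambda>f. L2_norm_on a (T_op tau cF mu a f)) ` {f \<in> L2_on a. L2_norm_on a f \<le> 1})"
  by (rule bdd_aboveI2[where M=a]) (auto intro: elem_bound)


lemma ind_restrict:
  assumes "(a::real) \<le> b"
  shows "(\<lambda>x. indicator {0<..b} x *\<^sub>R (indicator {0<..a} x * h x)) = (\<lambda>x. indicator {0<..a} x *\<^sub>R (h x::real))"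
  using assms by (auto simp: indicator_def fun_eq_iff)

lemma restr_int:
  assumes "(a::real) \<le> b"
  shows "set_integrable lborel {0<..b} (\<lambda>x. indicator {0<..a} x * (h x::real)) = set_integrable lborel {0<..a} h"
    "(LBINT x:{0<..b}. indicator {0<..a} x * h x) = (LBINT x:{0<..a}. h x)"
  unfolding set_integrable_def set_lebesgue_integral_def by (simp_all only: ind_restrict[OF assms])

lemma step:
  assumes a: "0 < a" and ab: "a \<le> b" and mu: "mu > 0" and f: "f \<in> L2_on a" and n: "L2_norm_on a f \<le> 1"
  shows "\<exists>g \<in> {g \<in> L2_on b. L2_norm_on b g \<le> 1}.
           L2_norm_on a (T_op tau cF mu a f) \<le> L2_norm_on b (T_op tau cF mu b g)"
proof -
  have b: "b > 0" using a ab by simp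
  have fm: "f \<in> borel_measurable lborel" and f2: "set_integrable lborel {0<..a} (\<lambda>x. (f x)\<^sup>2)"
    using f unfolding L2_on_def by auto
  define c where "c = sqrt (b / a)"
  have c2: "c\<^sup>2 = b / a" unfolding c_def using a b by simp
  define g where "g = (\<lambda>x. c * (indicator {0<..a} x * f x))"
  have gsq: "(g x)\<^sup>2 = (b/a) * (indicator {0<..a} x * (f x)\<^sup>2)" for x
    unfolding g_def using c2 by (simp add: power_mult_distrib indicator_def)
  have gm: "g \<in> borel_measurable lborel" unfolding g_def using fm by measurable
  have g2: "set_integrable lborel {0<..b} (\<lambda>x. (g x)\<^sup>2)"
    unfolding gsq by (rule set_integrable_mult_right) (simp add: restr_int[OF ab] f2)
  have gI: "(LBINT x:{0<..b}. (g x)\<^sup>2) = (b/a) * (LBINT x:{0<..a}. (f x)\<^sup>2)"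
    unfolding gsq by (simp add: restr_int[OF ab])
  have gn: "L2_norm_on b g = L2_norm_on a f"
    unfolding L2_norm_on_def Lam_int_def gI using a b by simp
  have gL: "g \<in> L2_on b" unfolding L2_on_def using gm g2 by simp
  have Tg: "T_op tau cF mu b g u = c * T_op tau cF mu a f u" for u
  proof -
    have "T_op tau cF mu b g u = (LBINT v:{0<..b}. c * (indicator {0<..a} v * (kappa tau cF mu 1 u v * f v)))"
      unfolding T_eq[OF b[THEN less_imp_neq, symmetric]] g_def by (simp add: ac_simps)
    also have "\<dots> = c * T_op tau cF mu a f u"
      by (simp only: set_integral_mult_right restr_int[OF ab] T_eq[OF a[THEN less_imp_neq, symmetric]])
    finally show ?thesis .
  qed
  let ?h = "\<lambda>u. (T_op tau cF mu a f u)\<^sup>2"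
  have hb: "set_integrable lborel {0<..b} ?h" by (rule Top_sq(1)[OF a b mu f n])
  have "(LBINT u:{0<..a}. ?h u) = (LBINT u:{0<..b}. indicator {0<..a} u * ?h u)"
    by (simp only: restr_int[OF ab])
  also have "\<dots> \<le> (LBINT u:{0<..b}. ?h u)"
  proof (rule set_integral_mono[OF _ hb])
    show "set_integrable lborel {0<..b} (\<lambda>u. indicator {0<..a} u * ?h u)"
      unfolding restr_int[OF ab] by (rule Top_sq(1)[OF a a mu f n])
    show "indicator {0<..a} u * ?h u \<le> ?h u" for u by (simp add: indicator_def)
  qed
  finally have le: "(LBINT u:{0<..a}. ?h u) \<le> (LBINT u:{0<..b}. ?h u)" .
  have "(1/a) * (LBINT u:{0<..a}. ?h u) \<le> (1/a) * (LBINT u:{0<..b}. ?h u)"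
    using le a by (intro mult_left_mono) auto
  also have "\<dots> = (1/b) * (LBINT u:{0<..b}. (T_op tau cF mu b g u)\<^sup>2)"
    unfolding Tg power_mult_distrib c2 using a b by simp
  finally have "L2_norm_on a (T_op tau cF mu a f) \<le> L2_norm_on b (T_op tau cF mu b g)"
    unfolding L2_norm_on_def Lam_int_def by (rule real_sqrt_le_mono)
  then show ?thesis using gL gn n by auto
qed


lemma one_L2: "a > 0 \<Longrightarrow> (\<lambda>_. 1) \<in> {f \<in> L2_on a. L2_norm_on a f \<le> 1}"
  unfolding L2_on_def L2_norm_on_def Lam_int_def
  by (auto simp: const_set_integrable const_set_integral)

lemma pos:
  assumes tau: "2 < tau" and cF: "cF > 0" and mu: "mu > 0" and a: "a > 0"
  shows "0 < L2_norm_on a (T_op tau cF mu a (\<lambda>_. 1))"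
proof -
  define al where "al = 1 / (tau - 1)"
  have al: "al > 0" unfolding al_def using tau by simp
  define c0 where "c0 = 1 - exp (- (cF\<^sup>2 * (a * a) powr (- al)) / mu)"
  have c0: "c0 > 0"
  proof -
    have "0 < cF\<^sup>2 * (a * a) powr (- al) / mu" using cF mu a by simp
    then show ?thesis unfolding c0_def by simp
  qed
  have Klow: "c0 \<le> kappa tau cF mu 1 u v" if u: "u \<in> {0<..a}" and v: "v \<in> {0<..a}" for u v
  proof -
    have "u * v \<le> a * a" using u v by (intro mult_mono) auto
    then have "(a * a) powr (- al) \<le> (u * v) powr (- al)"
      using u v al by (intro powr_mono2') auto
    then have "cF\<^sup>2 * (a * a) powr (- al) / mu \<le> cF\<^sup>2 * (u * v) powr (- al) / mu"
      using mu by (intro divide_right_mono mult_left_mono) auto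
    then show ?thesis unfolding c0_def kappa_def al_def by simp
  qed
  have one: "(\<lambda>_. 1) \<in> L2_on a" "L2_norm_on a (\<lambda>_. 1) \<le> 1" using one_L2[OF a] by auto
  have Ki: "set_integrable lborel {0<..a} (\<lambda>v. kappa tau cF mu 1 u v * 1)" for u
  proof (rule set_integrable_bound[OF const_set_integrable[of a 1]])
    show "set_borel_measurable lborel {0<..a} (\<lambda>v. kappa tau cF mu 1 u v * 1)"
      by (intro sbm kappa_meas2 borel_measurable_times) auto
    show "AE x in lborel. x \<in> {0<..a} \<longrightarrow> norm (kappa tau cF mu 1 u x * 1) \<le> norm (1::real)"
      using kappa1_bounds[OF mu] by simp
  qed
  have Tlow: "a * c0 \<le> T_op tau cF mu a (\<lambda>_. 1) u" if u: "u \<in> {0<..a}" for u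
  proof -
    have "(LBINT v:{0<..a}. c0) \<le> (LBINT v:{0<..a}. kappa tau cF mu 1 u v * 1)"
      by (rule set_integral_mono[OF const_set_integrable Ki]) (use Klow u in simp)
    then show ?thesis unfolding T_eq[OF a[THEN less_imp_neq, symmetric]] using a by (simp add: const_set_integral)
  qed
  have "(LBINT u:{0<..a}. (a * c0)\<^sup>2) \<le> (LBINT u:{0<..a}. (T_op tau cF mu a (\<lambda>_. 1) u)\<^sup>2)"
  proof (rule set_integral_mono[OF const_set_integrable Top_sq(1)[OF a a mu one]])
    show "(a * c0)\<^sup>2 \<le> (T_op tau cF mu a (\<lambda>_. 1) u)\<^sup>2" if "u \<in> {0<..a}" for u
      using Tlow[OF that] a c0 by (intro power_mono) auto
  qed
  moreover have "(LBINT u:{0<..a}. (a * c0)\<^sup>2) > 0" using a c0 by (simp add: const_set_integral)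
  ultimately show ?thesis unfolding L2_norm_on_def Lam_int_def using a by simp
qed

theorem lemma4p3:
  fixes tau cF mu :: real
  assumes "2 < tau" "tau < 3" "cF > 0" "mu > 0"
  shows "\<forall>a b. 0 < a \<longrightarrow> a \<le> b \<longrightarrow> lambda_c tau cF mu b \<le> lambda_c tau cF mu a"
proof (intro allI impI)
  fix a b :: real
  assume a: "0 < a" and ab: "a \<le> b"
  have b: "0 < b" using a ab by simp
  let ?S = "\<lambda>a. (\<lambda>f. L2_norm_on a (T_op tau cF mu a f)) ` {f \<in> L2_on a. L2_norm_on a f \<le> 1}"
  have p: "0 < T_norm tau cF mu a"
  proof -
    have "L2_norm_on a (T_op tau cF mu a (\<lambda>_. 1)) \<le> Sup (?S a)"
      by (rule cSup_upper[OF _ bdd[OF a assms(4)]]) (use one_L2[OF a] in blast)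
    then show ?thesis unfolding T_norm_def using pos[OF assms(1,3,4) a] by linarith
  qed
  have le: "T_norm tau cF mu a \<le> T_norm tau cF mu b"
    unfolding T_norm_def
  proof (rule cSup_mono[OF _ bdd[OF b assms(4)]])
    show "?S a \<noteq> {}" using one_L2[OF a] by blast
    fix y assume "y \<in> ?S a"
    then obtain f where f: "f \<in> L2_on a" "L2_norm_on a f \<le> 1" and y: "y = L2_norm_on a (T_op tau cF mu a f)" by auto
    from step[OF a ab assms(4) f] show "\<exists>x \<in> ?S b. y \<le> x" unfolding y by blast
  qed
  show "lambda_c tau cF mu b \<le> lambda_c tau cF mu a"
    unfolding lambda_c_def by (rule le_imp_inverse_le[OF le p])
qed

end
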